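(* Let $0<p<\infty$ and let $m,n\ge1$ be integers. Then there does not exist any continuous map $\tau:\mathbb{R}^m\to\mathbb{R}^n$ such that the composition operator $C_\tau f=f\circ\tau$ is bounded from $L^{p}(\mathbb{R}^n)$ to $L^\infty(\mathbb{R}^m)$.
   Context: $\mathbb{R}^n,\mathbb{R}^m$ carry Lebesgue measure. Boundedness means $\|C_\tau f\|_{L^\infty(\mathbb{R}^m)}\le C\|f\|_{L^{p}(\mathbb{R}^n)}$ for some $C$ and all $f\in L^{p}(\mathbb{R}^n)$. *)

theory Defs
  imports "HOL-Analysis.Analysis" "HOL-Probability.Essential_Supremum"
begin

definition Lp_integral :: "real \<Rightarrow> ('a::euclidean_space \<Rightarrow> real) \<Rightarrow> ennreal" where
  "Lp_integral p f = (\<integral>\<^sup>+ x. ennreal (\<bar>f x\<bar> powr p) \<partial>lborel)"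

definition in_Lp :: "real \<Rightarrow> ('a::euclidean_space \<Rightarrow> real) \<Rightarrow> bool" where
  "in_Lp p f \<longleftrightarrow> f \<in> borel_measurable lborel \<and> Lp_integral p f < \<infinity>"

definition Lp_norm :: "real \<Rightarrow> ('a::euclidean_space \<Rightarrow> real) \<Rightarrow> real" where
  "Lp_norm p f = enn2real (Lp_integral p f) powr (1 / p)"

definition Linf_norm :: "('a::euclidean_space \<Rightarrow> real) \<Rightarrow> ereal" where
  "Linf_norm g = esssup lborel (\<lambda>x. ereal \<bar>g x\<bar>)"

definition comp_op_bounded_Lp_Linf ::
    "real \<Rightarrow> ('a::euclidean_space \<Rightarrow> 'b::euclidean_space) \<Rightarrow> bool" where
  "comp_op_bounded_Lp_Linf p \<tau> \<longleftrightarrow>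
     (\<exists>C. \<forall>f. in_Lp p f \<longrightarrow> Linf_norm (f \<circ> \<tau>) \<le> ereal (C * Lp_norm p f))"

end

theory Submission
  imports Defs
begin

lemma key_bound:
  fixes \<tau> :: "real^'m \<Rightarrow> real^'n"
  assumes p: "0 < p" and cont: "continuous_on UNIV \<tau>"
    and C: "\<forall>f. in_Lp p f \<longrightarrow> Linf_norm (f \<circ> \<tau>) \<le> ereal (C * Lp_norm p f)"
    and r: "r > 0"
  shows "1 \<le> C * (unit_ball_vol (DIM(real^'n)) * r ^ DIM(real^'n)) powr (1/p)"
proof -
  define y0 where "y0 = \<tau> 0"
  define K where "K = unit_ball_vol (DIM(real^'n))"
  define f :: "real^'n \<Rightarrow> real" where "f = indicator (cball y0 r)"
  have pw: "\<And>x. ennreal (\<bar>f x\<bar> powr p) = indicator (cball y0 r) x"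
    using p by (auto simp: f_def indicator_def)
  have LI: "Lp_integral p f = emeasure lborel (cball y0 r)"
    unfolding Lp_integral_def pw
    by (rule nn_integral_indicator) simp
  have EM: "emeasure lborel (cball y0 r) = ennreal (K * r ^ DIM(real^'n))"
    unfolding K_def by (rule emeasure_cball) (use r in simp)
  have Kpos: "K > 0" unfolding K_def by simp
  have inLp: "in_Lp p f"
    proof -
    have "f \<in> borel_measurable lborel" unfolding f_def
      by (rule borel_measurable_indicator) simp
    thus ?thesis unfolding in_Lp_def LI EM by simp
  qed
  have LN: "Lp_norm p f = (K * r ^ DIM(real^'n)) powr (1/p)"
    unfolding Lp_norm_def LI EM using Kpos r by simp
  have ge1: "Linf_norm (f \<circ> \<tau>) \<ge> 1"
  proof (rule ccontr)
    assume "\<not> Linf_norm (f \<circ> \<tau>) \<ge> 1"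
    hence lt: "Linf_norm (f \<circ> \<tau>) < 1" by simp
    have AE1: "AE x in lborel. ereal \<bar>(f \<circ> \<tau>) x\<bar> < 1"
      using esssup_AE[where M=lborel and f="\<lambda>x. ereal \<bar>(f \<circ> \<tau>) x\<bar>"] lt
      unfolding Linf_norm_def by (elim eventually_mono) (rule le_less_trans)
    have "open (\<tau> -` ball y0 r)"
      using cont by (simp add: continuous_on_open_vimage)
    moreover have "0 \<in> \<tau> -` ball y0 r" using r by (simp add: y0_def)
    ultimately obtain d where d: "d > 0" "ball 0 d \<subseteq> \<tau> -` ball y0 r"
      by (meson open_contains_ball)
    have "AE x in lborel. x \<notin> ball (0::real^'m) d"
      using AE1
    proof (elim eventually_mono)
      fix x assume "ereal \<bar>(f \<circ> \<tau>) x\<bar> < 1"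
      thus "x \<notin> ball 0 d" using d by (auto simp: f_def)
    qed
    hence "emeasure lborel (ball (0::real^'m) d) = 0"
      by (subst (asm) AE_iff_measurable[of "ball 0 d"]) auto
    moreover have "emeasure lborel (ball (0::real^'m) d) > 0"
      using d by (simp add: emeasure_ball)
    ultimately show False by simp
  qed
  have "ereal 1 \<le> ereal (C * Lp_norm p f)"
    using ge1 C inLp by (metis one_ereal_def order_trans)
  thus ?thesis unfolding LN K_def by simp
qed

theorem proposition5p6:
  fixes p :: real
  assumes "0 < p"
  shows "\<not> (\<exists>\<tau> :: real^'m \<Rightarrow> real^'n.
             continuous_on UNIV \<tau> \<and> comp_op_bounded_Lp_Linf p \<tau>)"
proof
  assume "\<exists>\<tau> :: real^'m \<Rightarrow> real^'n. continuous_on UNIV \<tau> \<and> comp_op_bounded_Lp_Linf p \<tau>"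
  then obtain \<tau> :: "real^'m \<Rightarrow> real^'n" and C where cont: "continuous_on UNIV \<tau>"
    and C: "\<forall>f. in_Lp p f \<longrightarrow> Linf_norm (f \<circ> \<tau>) \<le> ereal (C * Lp_norm p f)"
    unfolding comp_op_bounded_Lp_Linf_def by blast
  define K where "K = unit_ball_vol (DIM(real^'n))"
  define n where "n = DIM(real^'n)"
  have Kpos: "K > 0" unfolding K_def by simp
  have n1: "n \<ge> 1" unfolding n_def by simp
  define eps where "eps = (1/(\<bar>C\<bar>+1)) powr p"
  have eps: "eps > 0" unfolding eps_def by simp
  define r where "r = min 1 (eps / (2*(K+1)))"
  have r: "r > 0" "r \<le> 1" using eps Kpos by (auto simp: r_def)
  have "r ^ n \<le> r ^ 1" using r n1 by (intro power_decreasing) auto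
  hence "K * r ^ n \<le> K * r" using Kpos by simp
  also have "K * r \<le> K * (eps / (2*(K+1)))" using Kpos by (intro mult_left_mono) (auto simp: r_def)
  also have "\<dots> < eps" using Kpos eps by (auto simp: field_simps intro!: add_pos_pos mult_pos_pos)
  finally have lt: "K * r ^ n < eps" .
  have "(K * r ^ n) powr (1/p) < eps powr (1/p)"
    using lt Kpos r assms by (intro powr_less_mono2) auto
  also have "eps powr (1/p) = 1/(\<bar>C\<bar>+1)"
    unfolding eps_def using assms by (simp add: powr_powr)
  finally have X: "(K * r ^ n) powr (1/p) < 1/(\<bar>C\<bar>+1)" .
  have "C * (K * r ^ n) powr (1/p) \<le> \<bar>C\<bar> * (K * r ^ n) powr (1/p)"
    by (simp add: mult_right_mono)
  also have "\<dots> \<le> \<bar>C\<bar> * (1/(\<bar>C\<bar>+1))"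
    using X by (intro mult_left_mono) auto
  also have "\<dots> < 1" by (simp add: field_simps)
  finally have "C * (K * r ^ n) powr (1/p) < 1" .
  moreover have "1 \<le> C * (K * r ^ n) powr (1/p)"
    using key_bound[OF assms cont C r(1)] unfolding K_def n_def .
  ultimately show False by simp
qed

end
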